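(* Let $d\ge1$ and $T<\infty$. For any $t\ge0$, the random vector $X_1(t)-X_2(t)$ has a density bounded uniformly by $\Gamma$. Moreover, the density $\mathsf p(t,x,v)$ of $X_1(t)$ satisfies, for every $t\in[0,T]$ and $x,v\in\mathbb R^d$, $$\mathsf p(t,x,v)\le Ce^{-|v|/C}\mathbf 1_{\{|v|\ge C\}}+\Gamma\mathbf 1_{\{|v|<C\}}$$ for some finite constant $C=C(R,\Gamma,T,d)$.
   Context: Fix $d\ge1$. Let $f_0:\mathbb R^{2d}\to[0,\infty)$ be a probability density with $\|f_0\|_{L^\infty}\le\Gamma<\infty$ and support contained in the closed Euclidean ball of radius $R<\infty$ centred at the origin of $\mathbb R^{2d}$. Let $(B_i)_{i\ge1}$ be independent standard Brownian motions in $\mathbb R^d$ and $(x_i(0),v_i(0))_{i\ge1}$ i.i.d. with density $f_0$, independent of the $B_i$. Define the independent (non-interacting) particles $X_i(t)=(x_i(t),v_i(t))=\big(x_i(0)+v_i(0)t+\int_0^tB_i(s)ds,\;v_i(0)+B_i(t)\big)$, $t\ge0$. *)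

theory Defs
  imports "HOL-Probability.Probability"
begin

definition gauss_density :: "real \<Rightarrow> real^'d \<Rightarrow> real" where
  "gauss_density s x = (\<Prod>i\<in>UNIV. normal_density 0 (sqrt s) (x $ i))"

text \<open>Standard Brownian motion in real^'d on the probability space M
  (time parameter restricted to [0,oo); values at negative times are irrelevant):
  starts at 0, continuous paths, independent increments over any finite increasing
  sequence of times, Gaussian increments with covariance (t - s) I.\<close>
definition std_BM :: "'a measure \<Rightarrow> ('a \<Rightarrow> real \<Rightarrow> real^'d) \<Rightarrow> bool" where
  "std_BM M B \<longleftrightarrow>
     (\<forall>t\<ge>0. (\<lambda>\<omega>. B \<omega> t) \<in> borel_measurable M) \<and>
     (\<forall>\<omega>\<in>space M. B \<omega> 0 = 0) \<and>
     (\<forall>\<omega>\<in>space M. continuous_on {0..} (B \<omega>)) \<and>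
     (\<forall>s t. 0 \<le> s \<longrightarrow> s < t \<longrightarrow>
        distributed M lborel (\<lambda>\<omega>. B \<omega> t - B \<omega> s)
          (\<lambda>x. ennreal (gauss_density (t - s) x))) \<and>
     (\<forall>(n::nat) (ts::nat \<Rightarrow> real). 0 \<le> ts 0 \<longrightarrow> (\<forall>k<n. ts k < ts (Suc k)) \<longrightarrow>
        prob_space.indep_vars M (\<lambda>_. borel) (\<lambda>k \<omega>. B \<omega> (ts (Suc k)) - B \<omega> (ts k)) {..<n})"

definition particle ::
  "('a \<Rightarrow> (real^'d) \<times> (real^'d)) \<Rightarrow> ('a \<Rightarrow> real \<Rightarrow> real^'d) \<Rightarrow> real \<Rightarrow> 'a \<Rightarrow> (real^'d) \<times> (real^'d)" where
  "particle Z B t \<omega> =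
     (fst (Z \<omega>) + t *\<^sub>R snd (Z \<omega>) + integral {0..t} (B \<omega>), snd (Z \<omega>) + B \<omega> t)"

definition admissible_f0 :: "real \<Rightarrow> real \<Rightarrow> ((real^'d) \<times> (real^'d) \<Rightarrow> real) \<Rightarrow> bool" where
  "admissible_f0 R \<Gamma> f0 \<longleftrightarrow>
     f0 \<in> borel_measurable lborel \<and> (\<forall>z. 0 \<le> f0 z) \<and>
     (\<integral>\<^sup>+ z. ennreal (f0 z) \<partial>lborel) = 1 \<and>
     (\<forall>z. f0 z \<le> \<Gamma>) \<and> (\<forall>z. norm z > R \<longrightarrow> f0 z = 0)"

definition particle_system ::
  "'a measure \<Rightarrow> real \<Rightarrow> real \<Rightarrow> ((real^'d) \<times> (real^'d) \<Rightarrow> real) \<Rightarrow>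
   (nat \<Rightarrow> 'a \<Rightarrow> (real^'d) \<times> (real^'d)) \<Rightarrow> (nat \<Rightarrow> 'a \<Rightarrow> real \<Rightarrow> real^'d) \<Rightarrow> bool" where
  "particle_system M R \<Gamma> f0 Z B \<longleftrightarrow>
     prob_space M \<and> admissible_f0 R \<Gamma> f0 \<and>
     (\<forall>i\<ge>1. std_BM M (B i)) \<and>
     (\<forall>i\<ge>1. distributed M lborel (Z i) (\<lambda>z. ennreal (f0 z))) \<and>
     (\<forall>i\<ge>1. prob_space.indep_set M (sets (vimage_algebra (space M) (Z i) borel))
                (sets (vimage_algebra (space M) (B i) (PiM UNIV (\<lambda>_::real. borel))))) \<and>
     prob_space.indep_vars M (\<lambda>_. borel \<Otimes>\<^sub>M PiM UNIV (\<lambda>_::real. borel))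
        (\<lambda>i \<omega>. (Z i \<omega>, B i \<omega>)) {1..}"

end

theory Submission
  imports Defs "HOL-Analysis.Ball_Volume"
begin


lemma lborel_translate_nn:
  fixes g :: "'b::euclidean_space \<Rightarrow> ennreal"
  assumes [measurable]: "g \<in> borel_measurable borel"
  shows "(\<integral>\<^sup>+x. g (x + w) \<partial>lborel) = (\<integral>\<^sup>+z. g z \<partial>lborel)"
proof -
  have "(\<integral>\<^sup>+z. g z \<partial>lborel) = (\<integral>\<^sup>+z. g z \<partial>(distr lborel borel ((+) w)))"
    by (simp add: lborel_distr_plus)
  also have "\<dots> = (\<integral>\<^sup>+x. g (w + x) \<partial>lborel)"
    by (subst nn_integral_distr) auto
  finally show ?thesis by (simp add: add.commute)
qed


lemma shear_lborel:
  fixes c :: real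
  shows "distr lborel borel (\<lambda>p::('b::euclidean_space \<times> 'b). (fst p + c *\<^sub>R snd p, snd p)) = lborel"
proof (rule measure_eqI)
  fix A assume "A \<in> sets (distr lborel borel (\<lambda>p::('b::euclidean_space \<times> 'b). (fst p + c *\<^sub>R snd p, snd p)))"
  then have A[measurable]: "A \<in> sets borel" by simp
  have "emeasure (distr lborel borel (\<lambda>p::('b \<times> 'b). (fst p + c *\<^sub>R snd p, snd p))) A
      = (\<integral>\<^sup>+p. indicator A (fst p + c *\<^sub>R snd p, snd p) \<partial>(lborel \<Otimes>\<^sub>M lborel))"
  proof -
    have m: "(\<lambda>p::('b \<times> 'b). (fst p + c *\<^sub>R snd p, snd p)) \<in> borel_measurable borel"
      by (intro borel_measurable_continuous_onI continuous_intros)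
    have "emeasure (distr lborel borel (\<lambda>p::('b \<times> 'b). (fst p + c *\<^sub>R snd p, snd p))) A
       = (\<integral>\<^sup>+p. indicator A p \<partial>(distr lborel borel (\<lambda>p::('b \<times> 'b). (fst p + c *\<^sub>R snd p, snd p))))"
      by (simp add: nn_integral_indicator)
    also have "\<dots> = (\<integral>\<^sup>+p. indicator A (fst p + c *\<^sub>R snd p, snd p) \<partial>lborel)"
      using m by (subst nn_integral_distr) auto
    finally show ?thesis by (simp add: lborel_prod)
  qed
  also have "\<dots> = (\<integral>\<^sup>+v. \<integral>\<^sup>+x. indicator A (x + c *\<^sub>R v, v) \<partial>lborel \<partial>lborel)"
    by (subst lborel_pair.nn_integral_snd[symmetric]) auto
  also have "\<dots> = (\<integral>\<^sup>+v. \<integral>\<^sup>+x. indicator A (x, v) \<partial>lborel \<partial>lborel)"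
  proof -
    have "(\<integral>\<^sup>+x. indicator A (x + c *\<^sub>R v, v) \<partial>lborel) = (\<integral>\<^sup>+x. indicator A (x, v) \<partial>lborel)" for v :: 'b
      using lborel_translate_nn[of "\<lambda>x. indicator A (x, v)" "c *\<^sub>R v"] by simp
    then show ?thesis by simp
  qed
  also have "\<dots> = (\<integral>\<^sup>+p. indicator A p \<partial>(lborel \<Otimes>\<^sub>M lborel))"
    by (subst lborel_pair.nn_integral_snd[symmetric]) (auto simp: lborel_prod)
  also have "\<dots> = emeasure lborel A"
    by (simp add: lborel_prod)
  finally show "emeasure (distr lborel borel (\<lambda>p::('b \<times> 'b). (fst p + c *\<^sub>R snd p, snd p))) A = emeasure lborel A" .
qed simp

lemma riemann_aux:
  fixes f :: "real \<Rightarrow> 'a::banach"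
  assumes cont: "continuous_on {0..t} f" and t: "0 \<le> t" and n: "0 < n"
  shows "m \<le> n \<Longrightarrow> integral {0..real m * t / real n} f = (\<Sum>k<m. integral {real k * t / real n..real (Suc k) * t / real n} f)"
proof (induction m)
  case 0
  then show ?case by simp
next
  case (Suc m)
  have le1: "real m * t / real n \<le> real (Suc m) * t / real n"
    using t n by (simp add: divide_right_mono mult_right_mono)
  have le2: "real (Suc m) * t / real n \<le> t"
  proof -
    have "real (Suc m) * t \<le> real n * t"
      using Suc.prems t by (intro mult_right_mono) auto
    then show ?thesis using n by (simp add: field_simps)
  qed
  have "continuous_on {0..real (Suc m) * t / real n} f"
    by (rule continuous_on_subset[OF cont]) (use le2 in auto)
  then have int: "f integrable_on {0..real (Suc m) * t / real n}"
    by (rule integrable_continuous_interval)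
  have "integral {0..real (Suc m) * t / real n} f = integral {0..real m * t / real n} f + integral {real m * t / real n..real (Suc m) * t / real n} f"
    using Henstock_Kurzweil_Integration.integral_combine[OF _ le1 int] t n by simp
  then show ?case using Suc by simp
qed


lemma riemann_sum_tendsto:
  fixes f :: "real \<Rightarrow> 'a::banach"
  assumes cont: "continuous_on {0..t} f" and t: "0 \<le> t"
  shows "(\<lambda>n. \<Sum>k<n. (t / real n) *\<^sub>R f (real k * t / real n)) \<longlonglongrightarrow> integral {0..t} f"
proof (rule LIMSEQ_I)
  fix r :: real assume r: "0 < r"
  define e where "e = r / (t + 1)"
  have e: "0 < e" using r t by (simp add: e_def)
  have "uniformly_continuous_on {0..t} f"
    using cont by (rule compact_uniformly_continuous) simp
  then obtain d where d: "0 < d" and dd: "\<And>x x'. x \<in> {0..t} \<Longrightarrow> x' \<in> {0..t} \<Longrightarrow> dist x' x < d \<Longrightarrow> dist (f x') (f x) < e"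
    unfolding uniformly_continuous_on_def using e by metis
  obtain N :: nat where N: "t / d < real N" using reals_Archimedean2 by blast
  show "\<exists>no. \<forall>n\<ge>no. norm ((\<Sum>k<n. (t / real n) *\<^sub>R f (real k * t / real n)) - integral {0..t} f) < r"
  proof (intro exI allI impI)
    fix n assume nN: "max N 1 \<le> n"
    then have n: "0 < n" by simp
    have tn: "t / real n < d"
    proof -
      have "t < real N * d" using N d by (simp add: field_simps)
      also have "\<dots> \<le> real n * d" using nN d by (intro mult_right_mono) auto
      finally show ?thesis using n by (simp add: field_simps)
    qed
    define a where "a k = real k * t / real n" for k
    have amono: "a k \<le> a (Suc k)" for k using t n by (simp add: a_def divide_right_mono mult_right_mono)
    have adiff: "a (Suc k) - a k = t / real n" for k by (simp add: a_def diff_divide_distrib[symmetric] algebra_simps)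
    have a0: "0 \<le> a k" for k using t by (simp add: a_def)
    have aN: "k < n \<Longrightarrow> a (Suc k) \<le> t" for k
    proof -
      assume "k < n"
      then have "real (Suc k) * t \<le> real n * t" using t by (intro mult_right_mono) auto
      then show ?thesis using n by (simp add: a_def field_simps)
    qed
    have int_eq: "integral {0..t} f = (\<Sum>k<n. integral {a k..a (Suc k)} f)"
      using riemann_aux[OF cont t n, of n] n by (simp add: a_def)
    have trm: "norm (integral {a k..a (Suc k)} f - (t / real n) *\<^sub>R f (a k)) \<le> (t / real n) * e" if k: "k < n" for k
    proof -
      have sub: "{a k..a (Suc k)} \<subseteq> {0..t}" using a0 aN[OF k] by auto
      have intf: "f integrable_on {a k..a (Suc k)}"
        by (rule integrable_continuous_interval) (rule continuous_on_subset[OF cont sub])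
      have "integral {a k..a (Suc k)} f - (t / real n) *\<^sub>R f (a k) = integral {a k..a (Suc k)} (\<lambda>x. f x - f (a k))"
      proof -
        have "integral {a k..a (Suc k)} (\<lambda>x. f x - f (a k)) = integral {a k..a (Suc k)} f - integral {a k..a (Suc k)} (\<lambda>x. f (a k))"
          by (rule Henstock_Kurzweil_Integration.integral_diff) (use intf in auto)
        then show ?thesis using amono[of k] adiff[of k] by (simp add: content_real)
      qed
      also have "norm \<dots> \<le> integral {a k..a (Suc k)} (\<lambda>x. e)"
      proof (rule Henstock_Kurzweil_Integration.integral_norm_bound_integral)
        show "(\<lambda>x. f x - f (a k)) integrable_on {a k..a (Suc k)}"
          using intf by (intro integrable_diff) auto
        show "(\<lambda>x. e) integrable_on {a k..a (Suc k)}" by (rule integrable_const_ivl)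
        fix x assume x: "x \<in> {a k..a (Suc k)}"
        have "dist x (a k) < d" using x adiff[of k] tn by (auto simp: dist_real_def)
        then have "dist (f x) (f (a k)) < e" using dd[of "a k" x] sub x amono[of k] by auto
        then show "norm (f x - f (a k)) \<le> e" by (simp add: dist_norm)
      qed
      also have "\<dots> = (t / real n) * e" using amono[of k] adiff[of k] by (simp add: content_real)
      finally show ?thesis .
    qed
    have "norm ((\<Sum>k<n. (t / real n) *\<^sub>R f (real k * t / real n)) - integral {0..t} f)
        = norm (\<Sum>k<n. integral {a k..a (Suc k)} f - (t / real n) *\<^sub>R f (a k))"
      by (simp add: int_eq a_def sum_subtractf norm_minus_commute)
    also have "\<dots> \<le> (\<Sum>k<n. (t / real n) * e)"
      by (rule order_trans[OF norm_sum sum_mono]) (use trm in auto)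
    also have "\<dots> = t * e" using n by simp
    also have "\<dots> < r" using t r by (simp add: e_def field_simps)
    finally show "norm ((\<Sum>k<n. (t / real n) *\<^sub>R f (real k * t / real n)) - integral {0..t} f) < r" .
  qed
qed


definition Iop :: "real \<Rightarrow> (real \<Rightarrow> real^'d) \<Rightarrow> real^'d" where
  "Iop t b = lim (\<lambda>n. \<Sum>k<n. (t / real n) *\<^sub>R b (real k * t / real n))"

lemma Iop_measurable[measurable]: "Iop t \<in> borel_measurable (PiM UNIV (\<lambda>_::real. borel))"
  unfolding Iop_def by measurable

lemma Iop_eq: "continuous_on {0..t} b \<Longrightarrow> 0 \<le> t \<Longrightarrow> Iop t b = integral {0..t} b"
  unfolding Iop_def by (rule limI) (rule riemann_sum_tendsto)

lemma distributed_cong_rv: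
  assumes "distributed M N X f" "\<And>\<omega>. \<omega> \<in> space M \<Longrightarrow> X \<omega> = Y \<omega>"
  shows "distributed M N Y f"
proof -
  have "X \<in> measurable M N" "distr M N X = density N f" "f \<in> borel_measurable N"
    using assms(1) unfolding distributed_def by auto
  moreover have "Y \<in> measurable M N \<longleftrightarrow> X \<in> measurable M N"
    using assms(2) by (intro measurable_cong) auto
  moreover have "distr M N Y = distr M N X"
    using assms(2) by (intro distr_cong) auto
  ultimately show ?thesis unfolding distributed_def by auto
qed

lemma (in prob_space) conv_density:
  fixes U W :: "'a \<Rightarrow> 'b::euclidean_space"
  assumes U: "distributed M lborel U f" and Wm[measurable]: "random_variable borel W"
    and ind: "indep_var borel U borel W"
  shows "distributed M lborel (\<lambda>\<omega>. U \<omega> + W \<omega>) (\<lambda>z. \<integral>\<^sup>+w. f (z - w) \<partial>(distr M borel W))"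
proof -
  have fm[measurable]: "f \<in> borel_measurable borel"
    using distributed_borel_measurable[OF U] by simp
  have Um[measurable]: "random_variable borel U"
    using distributed_measurable[OF U] by simp
  define P where "P = distr M borel W"
  interpret P: prob_space P unfolding P_def by (rule prob_space_distr) simp
  have sP[measurable_cong]: "sets P = sets borel" unfolding P_def by simp
  interpret LP: pair_sigma_finite lborel P ..
  have dU: "distr M borel U = density lborel f"
    using distributed_distr_eq_density[OF U] by (metis distr_cong sets_lborel)
  interpret D: prob_space "density lborel f" using dU[symmetric] by (metis prob_space_distr Um)
  interpret DP: pair_sigma_finite "density lborel f" P ..
  have hm: "(\<lambda>z. \<integral>\<^sup>+w. f (z - w) \<partial>P) \<in> borel_measurable lborel"
    by measurable
  have eq: "distr M lborel (\<lambda>\<omega>. U \<omega> + W \<omega>) = density lborel (\<lambda>z. \<integral>\<^sup>+w. f (z - w) \<partial>P)"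
  proof (rule measure_eqI)
    fix A assume "A \<in> sets (distr M lborel (\<lambda>\<omega>. U \<omega> + W \<omega>))"
    then have A[measurable]: "A \<in> sets borel" by simp
    have "emeasure (distr M lborel (\<lambda>\<omega>. U \<omega> + W \<omega>)) A = (\<integral>\<^sup>+\<omega>. indicator A (U \<omega> + W \<omega>) \<partial>M)"
      by (subst emeasure_distr) (auto simp flip: nn_integral_indicator intro!: nn_integral_cong split: split_indicator)
    also have "\<dots> = (\<integral>\<^sup>+p. indicator A (fst p + snd p) \<partial>(distr M (borel \<Otimes>\<^sub>M borel) (\<lambda>\<omega>. (U \<omega>, W \<omega>))))"
      by (subst nn_integral_distr) auto
    also have "\<dots> = (\<integral>\<^sup>+p. indicator A (fst p + snd p) \<partial>(density lborel f \<Otimes>\<^sub>M P))"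
      using ind unfolding indep_var_distribution_eq P_def dU by simp
    also have "\<dots> = (\<integral>\<^sup>+w. \<integral>\<^sup>+x. indicator A (x + w) \<partial>density lborel f \<partial>P)"
      by (subst DP.nn_integral_snd[symmetric]) auto
    also have "\<dots> = (\<integral>\<^sup>+w. \<integral>\<^sup>+x. f x * indicator A (x + w) \<partial>lborel \<partial>P)"
      by (intro nn_integral_cong) (simp add: nn_integral_density)
    also have "\<dots> = (\<integral>\<^sup>+w. \<integral>\<^sup>+z. f (z - w) * indicator A z \<partial>lborel \<partial>P)"
    proof -
      have "(\<integral>\<^sup>+x. f x * indicator A (x + w) \<partial>lborel) = (\<integral>\<^sup>+z. f (z - w) * indicator A z \<partial>lborel)" for w
        using lborel_translate_nn[of "\<lambda>z. f (z - w) * indicator A z" w] by simp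
      then show ?thesis by simp
    qed
    also have "\<dots> = (\<integral>\<^sup>+z. \<integral>\<^sup>+w. f (z - w) * indicator A z \<partial>P \<partial>lborel)"
      using LP.Fubini'[of "\<lambda>z w. f (z - w) * indicator A z"] by (simp add: sP)
    also have "\<dots> = (\<integral>\<^sup>+z. (\<integral>\<^sup>+w. f (z - w) \<partial>P) * indicator A z \<partial>lborel)"
      by (intro nn_integral_cong nn_integral_multc) simp
    also have "\<dots> = emeasure (density lborel (\<lambda>z. \<integral>\<^sup>+w. f (z - w) \<partial>P)) A"
      by (simp add: emeasure_density)
    finally show "emeasure (distr M lborel (\<lambda>\<omega>. U \<omega> + W \<omega>)) A = emeasure (density lborel (\<lambda>z. \<integral>\<^sup>+w. f (z - w) \<partial>P)) A" .
  qed simp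
  show ?thesis unfolding distributed_def P_def[symmetric] using eq hm by simp
qed

lemma particle_density:
  fixes M :: "'a measure" and Z :: "nat \<Rightarrow> 'a \<Rightarrow> (real^'d) \<times> (real^'d)"
    and B :: "nat \<Rightarrow> 'a \<Rightarrow> real \<Rightarrow> real^'d"
  assumes ps: "particle_system M R \<Gamma> f0 Z B" and t: "0 \<le> t" and i: "1 \<le> i"
  shows "\<exists>h. distributed M lborel (particle (Z i) (B i) t) h \<and> (\<forall>z. h z \<le> ennreal \<Gamma>) \<and>
     (\<forall>x v. h (x, v) \<le> ennreal \<Gamma> * emeasure M {\<omega>\<in>space M. norm (v - B i \<omega> t) \<le> R})"
proof -
  from ps have P: "prob_space M" and adm: "admissible_f0 R \<Gamma> f0" and bm: "std_BM M (B i)"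
    and dZ: "distributed M lborel (Z i) (\<lambda>z. ennreal (f0 z))"
    and indZB: "prob_space.indep_set M (sets (vimage_algebra (space M) (Z i) borel))
                (sets (vimage_algebra (space M) (B i) (PiM UNIV (\<lambda>_::real. borel))))"
    and indall: "prob_space.indep_vars M (\<lambda>_. borel \<Otimes>\<^sub>M PiM UNIV (\<lambda>_::real. borel)) (\<lambda>i \<omega>. (Z i \<omega>, B i \<omega>)) {1..}"
    unfolding particle_system_def using i by auto
  interpret prob_space M by fact
  have f0m[measurable]: "f0 \<in> borel_measurable borel" and f0le: "\<And>z. f0 z \<le> \<Gamma>"
    and f0supp: "\<And>z. norm z > R \<Longrightarrow> f0 z = 0"
    using adm unfolding admissible_f0_def by auto
  have ZBm: "(\<lambda>\<omega>. (Z i \<omega>, B i \<omega>)) \<in> measurable M (borel \<Otimes>\<^sub>M PiM UNIV (\<lambda>_::real. borel))"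
    using indall i unfolding indep_vars_def by auto
  have Zm[measurable]: "Z i \<in> borel_measurable M"
    using measurable_compose[OF ZBm measurable_fst] by simp
  have Bm[measurable]: "B i \<in> measurable M (PiM UNIV (\<lambda>_::real. borel))"
    using measurable_compose[OF ZBm measurable_snd] by simp
  define S where "S = (\<lambda>p::(real^'d)\<times>(real^'d). (fst p + t *\<^sub>R snd p, snd p))"
  define Si where "Si = (\<lambda>p::(real^'d)\<times>(real^'d). (fst p + (-t) *\<^sub>R snd p, snd p))"
  define G where "G = (\<lambda>b::real \<Rightarrow> real^'d. (Iop t b, b t))"
  have Sm[measurable]: "S \<in> borel_measurable borel"
    unfolding S_def by (intro borel_measurable_continuous_onI continuous_intros)
  have Sim[measurable]: "Si \<in> borel_measurable borel"
    unfolding Si_def by (intro borel_measurable_continuous_onI continuous_intros)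
  have Gm[measurable]: "G \<in> borel_measurable (PiM UNIV (\<lambda>_::real. borel))"
    unfolding G_def by measurable
  have eqp: "particle (Z i) (B i) t \<omega> = S (Z i \<omega>) + G (B i \<omega>)" if w: "\<omega> \<in> space M" for \<omega>
  proof -
    have "continuous_on {0..} (B i \<omega>)" using bm w unfolding std_BM_def by auto
    then have "continuous_on {0..t} (B i \<omega>)" by (rule continuous_on_subset) auto
    then have "Iop t (B i \<omega>) = integral {0..t} (B i \<omega>)" using t by (rule Iop_eq)
    then show ?thesis unfolding particle_def S_def G_def by (simp add: algebra_simps)
  qed
  have genZ: "{(S \<circ> Z i) -` A \<inter> space M | A. A \<in> sets borel} \<subseteq> {Z i -` A \<inter> space M | A. A \<in> sets borel}"
  proof -
    have "\<exists>A'. (S \<circ> Z i) -` A \<inter> space M = Z i -` A' \<inter> space M \<and> A' \<in> sets borel" if "A \<in> sets borel" for A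
    proof -
      have "S -` A \<in> sets borel" using measurable_sets[OF Sm that] by simp
      then show ?thesis by (intro exI[of _ "S -` A"]) auto
    qed
    then show ?thesis by blast
  qed
  have genB: "{(G \<circ> B i) -` A \<inter> space M | A. A \<in> sets borel} \<subseteq> {B i -` A \<inter> space M | A. A \<in> sets (PiM UNIV (\<lambda>_::real. borel))}"
  proof -
    have "\<exists>A'. (G \<circ> B i) -` A \<inter> space M = B i -` A' \<inter> space M \<and> A' \<in> sets (PiM UNIV (\<lambda>_::real. borel))" if "A \<in> sets borel" for A
    proof -
      have "G -` A \<inter> space (PiM UNIV (\<lambda>_::real. borel)) \<in> sets (PiM UNIV (\<lambda>_::real. borel))" using measurable_sets[OF Gm that] by simp
      moreover have "(G \<circ> B i) -` A \<inter> space M = B i -` (G -` A \<inter> space (PiM UNIV (\<lambda>_::real. borel))) \<inter> space M"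
        using measurable_space[OF Bm] by auto
      ultimately show ?thesis by blast
    qed
    then show ?thesis by blast
  qed
  have indep2: "indep_var borel (S \<circ> Z i) borel (G \<circ> B i)"
    unfolding indep_var_eq
  proof (intro conjI)
    show "random_variable borel (S \<circ> Z i)" "random_variable borel (G \<circ> B i)" by auto
    have "indep_sets (case_bool (sigma_sets (space M) {Z i -` A \<inter> space M | A. A \<in> sets borel})
       (sigma_sets (space M) {B i -` A \<inter> space M | A. A \<in> sets (PiM UNIV (\<lambda>_::real. borel))})) UNIV"
      using indZB unfolding indep_set_def sets_vimage_algebra .
    then show "indep_set (sigma_sets (space M) {(S \<circ> Z i) -` A \<inter> space M | A. A \<in> sets borel})
       (sigma_sets (space M) {(G \<circ> B i) -` A \<inter> space M | A. A \<in> sets borel})"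
      unfolding indep_set_def
      by (rule indep_sets_mono_sets) (auto split: bool.split intro: subsetD[OF sigma_sets_mono'[OF genZ]] subsetD[OF sigma_sets_mono'[OF genB]])
  qed
  have dS: "distributed M lborel (\<lambda>\<omega>. S (Z i \<omega>)) (\<lambda>z. ennreal (f0 (Si z)))"
  proof -
    have dist: "distr M lborel (Z i) = density lborel (\<lambda>z. ennreal (f0 z))"
      using dZ by (simp add: distributed_def)
    have "distr M lborel (\<lambda>\<omega>. S (Z i \<omega>)) = distr (distr M lborel (Z i)) lborel S"
      by (subst distr_distr) (auto simp: comp_def)
    also have "\<dots> = distr (density lborel (\<lambda>z. ennreal (f0 z))) lborel S" by (simp add: dist)
    also have "\<dots> = distr (density (distr lborel borel Si) (\<lambda>z. ennreal (f0 z))) lborel S"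
      by (simp only: Si_def shear_lborel)
    also have "\<dots> = density lborel ((\<lambda>z. ennreal (f0 z)) \<circ> Si)"
      by (rule distr_density_distr) (use Sm Sim in \<open>auto simp: S_def Si_def\<close>)
    finally show ?thesis unfolding distributed_def comp_def by auto
  qed
  define P where "P = distr M borel (\<lambda>\<omega>. G (B i \<omega>))"
  have conv: "distributed M lborel (\<lambda>\<omega>. S (Z i \<omega>) + G (B i \<omega>)) (\<lambda>z. \<integral>\<^sup>+w. ennreal (f0 (Si (z - w))) \<partial>P)"
    using conv_density[OF dS _ ] indep2 unfolding P_def comp_def by auto
  then have d: "distributed M lborel (particle (Z i) (B i) t) (\<lambda>z. \<integral>\<^sup>+w. ennreal (f0 (Si (z - w))) \<partial>P)"
    by (rule distributed_cong_rv) (simp add: eqp)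
  interpret PP: prob_space P unfolding P_def by (rule prob_space_distr) simp
  show ?thesis
  proof (intro exI conjI allI)
    show "distributed M lborel (particle (Z i) (B i) t) (\<lambda>z. \<integral>\<^sup>+w. ennreal (f0 (Si (z - w))) \<partial>P)" by (rule d)
  next
    fix z
    have "(\<integral>\<^sup>+w. ennreal (f0 (Si (z - w))) \<partial>P) \<le> (\<integral>\<^sup>+w. ennreal \<Gamma> \<partial>P)"
      by (intro nn_integral_mono) (simp add: f0le ennreal_leI)
    also have "\<dots> = ennreal \<Gamma>" by (simp add: PP.emeasure_space_1)
    finally show "(\<integral>\<^sup>+w. ennreal (f0 (Si (z - w))) \<partial>P) \<le> ennreal \<Gamma>" .
  next
    fix x v
    have Aset[measurable]: "{w::(real^'d)\<times>(real^'d). norm (v - snd w) \<le> R} \<in> sets borel"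
      by (intro borel_closed closed_Collect_le continuous_intros)
    have "(\<integral>\<^sup>+w. ennreal (f0 (Si ((x, v) - w))) \<partial>P) \<le> (\<integral>\<^sup>+w. ennreal \<Gamma> * indicator {w. norm (v - snd w) \<le> R} w \<partial>P)"
    proof (intro nn_integral_mono)
      fix w :: "(real^'d)\<times>(real^'d)"
      show "ennreal (f0 (Si ((x, v) - w))) \<le> ennreal \<Gamma> * indicator {w. norm (v - snd w) \<le> R} w"
      proof (cases "norm (v - snd w) \<le> R")
        case True then show ?thesis using f0le by (simp add: ennreal_leI)
      next
        case False
        have "norm (v - snd w) \<le> norm (Si ((x, v) - w))"
          unfolding Si_def using norm_snd_le[of "v - snd w"] by simp
        then have "f0 (Si ((x, v) - w)) = 0" using f0supp False by auto
        then show ?thesis by simp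
      qed
    qed
    also have "\<dots> = ennreal \<Gamma> * emeasure P {w. norm (v - snd w) \<le> R}"
      by (subst nn_integral_cmult_indicator) (auto simp: P_def)
    also have "emeasure P {w. norm (v - snd w) \<le> R} = emeasure M {\<omega>\<in>space M. norm (v - B i \<omega> t) \<le> R}"
      unfolding P_def by (subst emeasure_distr) (auto simp: G_def intro!: arg_cong[where f="emeasure M"])
    finally show "(\<integral>\<^sup>+w. ennreal (f0 (Si ((x, v) - w))) \<partial>P) \<le> ennreal \<Gamma> * emeasure M {\<omega>\<in>space M. norm (v - B i \<omega> t) \<le> R}" .
  qed
qed



lemma gauss_density_eq:
  fixes x :: "real^'d"
  assumes t: "0 < t"
  shows "gauss_density t x = (1 / sqrt (2 * pi * t)) ^ CARD('d) * exp (- (norm x)\<^sup>2 / (2 * t))"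
proof -
  have "gauss_density t x = (\<Prod>i\<in>UNIV. (1 / sqrt (2 * pi * t)) * exp (- (x $ i)\<^sup>2 / (2 * t)))"
    unfolding gauss_density_def normal_density_def using t by (intro prod.cong) simp_all
  also have "\<dots> = (\<Prod>i\<in>(UNIV::'d set). (1 / sqrt (2 * pi * t))) * (\<Prod>i\<in>UNIV. exp (- (x $ i)\<^sup>2 / (2 * t)))"
    by (simp only: prod.distrib)
  also have "\<dots> = (1 / sqrt (2 * pi * t)) ^ CARD('d) * exp (\<Sum>i\<in>UNIV. - (x $ i)\<^sup>2 / (2 * t))"
    by (simp add: exp_sum prod_constant)
  also have "(\<Sum>i\<in>UNIV. - (x $ i)\<^sup>2 / (2 * t)) = - (norm x)\<^sup>2 / (2 * t)"
  proof -
    have "(norm x)\<^sup>2 = (\<Sum>i\<in>UNIV. (x $ i)\<^sup>2)"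
      unfolding norm_vec_def L2_set_def by (simp add: sum_nonneg)
    then show ?thesis by (simp add: sum_divide_distrib[symmetric] sum_negf)
  qed
  finally show ?thesis .
qed

lemma exp_neg_le_inv: "0 < (a::real) \<Longrightarrow> exp (- a) \<le> 1 / a"
proof -
  assume a: "0 < a"
  have "a \<le> exp a" using exp_ge_add_one_self[of a] by linarith
  then show ?thesis using a by (simp add: exp_minus field_simps)
qed

lemma gauss_bound:
  fixes x :: "real^'d"
  assumes t: "0 < t" and tT: "t \<le> T" and s: "0 \<le> s" "s \<le> norm x"
    and big: "4 * real CARD('d) * (1 + T) \<le> s\<^sup>2"
  shows "gauss_density t x \<le> exp (- s\<^sup>2 / (4 * T))"
proof -
  define d where "d = real CARD('d)"
  have d: "1 \<le> d" unfolding d_def by simp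
  define q where "q = 1 / sqrt (2 * pi * t)"
  define a where "a = s\<^sup>2 / (4 * d * t)"
  have T: "0 < T" using t tT by simp
  have "0 < 4 * d * (1 + T)" using d T by simp
  then have s2: "0 < s\<^sup>2" using big unfolding d_def by linarith
  have a: "0 < a" unfolding a_def using s2 d t by simp
  have q: "0 < q" unfolding q_def using t by simp
  have step2: "exp (- (norm x)\<^sup>2 / (2 * t)) \<le> exp (- s\<^sup>2 / (4 * t)) * exp (- s\<^sup>2 / (4 * T))"
  proof -
    have "s\<^sup>2 \<le> (norm x)\<^sup>2" using s by (simp add: power_mono)
    then have "s\<^sup>2 / (2 * t) \<le> (norm x)\<^sup>2 / (2 * t)" using t by (simp add: divide_right_mono)
    moreover have "s\<^sup>2 / (4 * T) \<le> s\<^sup>2 / (4 * t)" using t tT s2 by (simp add: frac_le)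
    ultimately have "- (norm x)\<^sup>2 / (2 * t) \<le> - s\<^sup>2 / (4 * t) + - s\<^sup>2 / (4 * T)" by (simp add: field_simps)
    then show ?thesis by (simp add: exp_add[symmetric])
  qed
  have step3: "exp (- s\<^sup>2 / (4 * t)) = exp (- a) ^ CARD('d)"
  proof -
    have "- s\<^sup>2 / (4 * t) = real CARD('d) * (- a)" unfolding a_def d_def using t by (simp add: field_simps)
    then show ?thesis by (simp add: exp_of_nat_mult[symmetric])
  qed
  have step4: "q * exp (- a) \<le> 1"
  proof -
    have "q * exp (- a) \<le> q * (1 / a)" by (rule mult_left_mono[OF exp_neg_le_inv[OF a]]) (use q in simp)
    also have "\<dots> = 4 * d * t / (s\<^sup>2 * sqrt (2 * pi * t))" unfolding q_def a_def by (simp add: field_simps)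
    also have "\<dots> \<le> 1"
    proof -
      have st: "sqrt t \<le> 1 + T"
      proof (cases "t \<le> 1")
        case True then have "sqrt t \<le> 1" by simp
        then show ?thesis using T by linarith
      next
        case False
        then have "1 \<le> sqrt t" by simp
        then have "sqrt t * 1 \<le> sqrt t * sqrt t" by (intro mult_left_mono) auto
        then have "sqrt t \<le> t" using t by simp
        then show ?thesis using tT by simp
      qed
      have "sqrt t \<le> sqrt (2 * pi * t)" using t pi_gt3 by (intro real_sqrt_le_mono) simp
      have "4 * d * t = 4 * d * (sqrt t * sqrt t)" using t by simp
      also have "\<dots> = (4 * d * sqrt t) * sqrt t" by (simp only: mult.assoc)
      also have "\<dots> \<le> (4 * d * (1 + T)) * sqrt t" using st d t by (intro mult_right_mono mult_left_mono) auto
      also have "\<dots> \<le> s\<^sup>2 * sqrt t" using big t unfolding d_def by (intro mult_right_mono) auto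
      also have "\<dots> \<le> s\<^sup>2 * sqrt (2 * pi * t)" using \<open>sqrt t \<le> sqrt (2 * pi * t)\<close> s2 by (intro mult_left_mono) auto
      finally have "4 * d * t \<le> s\<^sup>2 * sqrt (2 * pi * t)" .
      moreover have "0 < s\<^sup>2 * sqrt (2 * pi * t)" using s2 t by simp
      ultimately show ?thesis by simp
    qed
    finally show ?thesis .
  qed
  have "gauss_density t x = q ^ CARD('d) * exp (- (norm x)\<^sup>2 / (2 * t))"
    using gauss_density_eq[OF t] unfolding q_def .
  also have "\<dots> \<le> q ^ CARD('d) * (exp (- a) ^ CARD('d) * exp (- s\<^sup>2 / (4 * T)))"
    using step2 step3 q by (intro mult_left_mono) auto
  also have "\<dots> = (q * exp (- a)) ^ CARD('d) * exp (- s\<^sup>2 / (4 * T))"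
    by (simp add: power_mult_distrib)
  also have "\<dots> \<le> 1 * exp (- s\<^sup>2 / (4 * T))"
    using step4 q by (intro mult_right_mono power_le_one) auto
  finally show ?thesis by simp
qed



lemma ball_prob_bound:
  fixes B :: "'a \<Rightarrow> real \<Rightarrow> real^'d" and v :: "real^'d"
  assumes P: "prob_space M" and bm: "std_BM M B" and t: "0 < t" "t \<le> T" and R: "0 \<le> R"
    and s: "0 \<le> norm v - R" and big: "4 * real CARD('d) * (1 + T) \<le> (norm v - R)\<^sup>2"
  shows "emeasure M {\<omega>\<in>space M. norm (v - B \<omega> t) \<le> R}
     \<le> ennreal (exp (- (norm v - R)\<^sup>2 / (4 * T)) * (unit_ball_vol (real CARD('d)) * R ^ CARD('d)))"
proof -
  define K where "K = exp (- (norm v - R)\<^sup>2 / (4 * T))"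
  have "\<forall>s t. 0 \<le> s \<longrightarrow> s < t \<longrightarrow> distributed M lborel (\<lambda>\<omega>. B \<omega> t - B \<omega> s) (\<lambda>x. ennreal (gauss_density (t - s) x))"
    using bm unfolding std_BM_def by blast
  then have "distributed M lborel (\<lambda>\<omega>. B \<omega> t - B \<omega> 0) (\<lambda>x. ennreal (gauss_density (t - 0) x))"
    using t by blast
  then have d0: "distributed M lborel (\<lambda>\<omega>. B \<omega> t - B \<omega> 0) (\<lambda>x. ennreal (gauss_density t x))"
    by simp
  have d1: "distributed M lborel (\<lambda>\<omega>. B \<omega> t) (\<lambda>x. ennreal (gauss_density t x))"
    by (rule distributed_cong_rv[OF d0]) (use bm in \<open>auto simp: std_BM_def\<close>)
  have Xm: "(\<lambda>\<omega>. B \<omega> t) \<in> measurable M lborel" and gm: "(\<lambda>x::real^'d. ennreal (gauss_density t x)) \<in> borel_measurable lborel"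
    and dd: "distr M lborel (\<lambda>\<omega>. B \<omega> t) = density lborel (\<lambda>x. ennreal (gauss_density t x))"
    using d1 unfolding distributed_def by auto
  have seteq: "{\<omega>\<in>space M. norm (v - B \<omega> t) \<le> R} = (\<lambda>\<omega>. B \<omega> t) -` cball v R \<inter> space M"
    by (auto simp: dist_norm)
  have "emeasure M {\<omega>\<in>space M. norm (v - B \<omega> t) \<le> R} = emeasure (distr M lborel (\<lambda>\<omega>. B \<omega> t)) (cball v R)"
    unfolding seteq using Xm by (subst emeasure_distr) auto
  also have "\<dots> = (\<integral>\<^sup>+x. ennreal (gauss_density t x) * indicator (cball v R) x \<partial>lborel)"
    unfolding dd by (rule emeasure_density) (use gm in auto)
  also have "\<dots> \<le> (\<integral>\<^sup>+x. ennreal K * indicator (cball v R) x \<partial>lborel)"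
  proof (intro nn_integral_mono)
    fix x :: "real^'d"
    show "ennreal (gauss_density t x) * indicator (cball v R) x \<le> ennreal K * indicator (cball v R) x"
    proof (cases "x \<in> cball v R")
      case True
      then have "norm (v - x) \<le> R" by (simp add: dist_norm)
      moreover have "norm v \<le> norm x + norm (v - x)" using norm_triangle_ineq[of x "v - x"] by simp
      ultimately have nv: "norm v - R \<le> norm x" by linarith
      have "gauss_density t x \<le> K" unfolding K_def
        by (rule gauss_bound[OF t s nv big])
      then show ?thesis using True by (simp add: ennreal_leI)
    qed simp
  qed
  also have "\<dots> = ennreal K * emeasure lborel (cball v R)"
    by (subst nn_integral_cmult_indicator) auto
  also have "\<dots> = ennreal (K * (unit_ball_vol (real CARD('d)) * R ^ CARD('d)))"
    using R by (simp add: emeasure_cball ennreal_mult K_def)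
  finally show ?thesis unfolding K_def .
qed

definition Fp :: "real \<Rightarrow> ((real^'d) \<times> (real^'d)) \<times> (real \<Rightarrow> real^'d) \<Rightarrow> (real^'d) \<times> (real^'d)" where
  "Fp t p = (fst (fst p) + t *\<^sub>R snd (fst p) + Iop t (snd p), snd (fst p) + snd p t)"

lemma Fp_measurable[measurable]: "(Fp t :: _ \<Rightarrow> (real^'d) \<times> (real^'d)) \<in> borel_measurable (borel \<Otimes>\<^sub>M PiM UNIV (\<lambda>_::real. borel))"
proof -
  define S' where "S' = (\<lambda>z::(real^'d)\<times>(real^'d). (fst z + t *\<^sub>R snd z, snd z))"
  define G' where "G' = (\<lambda>b::real \<Rightarrow> real^'d. (Iop t b, b t))"
  have Sm: "S' \<in> borel_measurable borel"
    unfolding S'_def by (intro borel_measurable_continuous_onI continuous_intros)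
  have Gm: "G' \<in> borel_measurable (PiM UNIV (\<lambda>_::real. borel))"
    unfolding G'_def by measurable
  have "(\<lambda>p. S' (fst p) + G' (snd p)) \<in> borel_measurable (borel \<Otimes>\<^sub>M PiM UNIV (\<lambda>_::real. borel))"
    by (intro borel_measurable_add measurable_compose[OF measurable_fst Sm] measurable_compose[OF measurable_snd Gm])
  moreover have "Fp t = (\<lambda>p. S' (fst p) + G' (snd p))"
    by (auto simp: Fp_def S'_def G'_def fun_eq_iff)
  ultimately show ?thesis by simp
qed

lemma particle_Fp:
  assumes "std_BM M B" "\<omega> \<in> space M" "0 \<le> t"
  shows "particle Z B t \<omega> = Fp t (Z \<omega>, B \<omega>)"
proof -
  have "continuous_on {0..} (B \<omega>)" using assms unfolding std_BM_def by auto
  then have "continuous_on {0..t} (B \<omega>)" by (rule continuous_on_subset) auto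
  then have "Iop t (B \<omega>) = integral {0..t} (B \<omega>)" using assms(3) by (rule Iop_eq)
  then show ?thesis unfolding particle_def Fp_def by simp
qed

lemma density_real:
  assumes "distributed M N X h" "\<And>z. h z \<le> ennreal G" "0 \<le> G"
  shows "distributed M N X (\<lambda>z. ennreal (enn2real (h z)))" "\<And>z. 0 \<le> enn2real (h z) \<and> enn2real (h z) \<le> G"
proof -
  have "(\<lambda>z. ennreal (enn2real (h z))) = h"
  proof
    fix z have "h z < top" using assms(2)[of z] by (metis ennreal_less_top order_le_less_trans)
    then show "ennreal (enn2real (h z)) = h z" by simp
  qed
  then show "distributed M N X (\<lambda>z. ennreal (enn2real (h z)))" using assms(1) by simp
  fix z
  have "enn2real (h z) \<le> enn2real (ennreal G)" by (rule enn2real_mono[OF assms(2)]) simp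
  then show "0 \<le> enn2real (h z) \<and> enn2real (h z) \<le> G" using assms(3) by simp
qed



lemma tail_ineq:
  fixes \<Gamma> V R T d C nv :: real
  assumes G: "0 \<le> \<Gamma>" and V: "0 \<le> V" and R: "0 \<le> R" and T: "0 < T" and d: "1 \<le> d"
    and C: "C = 1 + \<Gamma> * V + 2 * R + 16 * T + 16 * d * (1 + T)" and nv: "C \<le> nv"
  shows "0 \<le> nv - R" "4 * d * (1 + T) \<le> (nv - R)\<^sup>2"
    "\<Gamma> * (exp (- (nv - R)\<^sup>2 / (4 * T)) * V) \<le> C * exp (- nv / C)"
proof -
  have C1: "1 \<le> C" using C G V R T d by (simp add: mult_nonneg_nonneg)
  have GV: "\<Gamma> * V \<le> C" using C G V R T d by (simp add: mult_nonneg_nonneg)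
  have RC: "2 * R \<le> C" using C G V R T d by (simp add: mult_nonneg_nonneg)
  have TC: "16 * T \<le> C" using C G V R T d by (simp add: mult_nonneg_nonneg)
  have dC: "16 * d * (1 + T) \<le> C" using C G V R T d by (simp add: mult_nonneg_nonneg)
  have half: "nv / 2 \<le> nv - R" using RC nv by linarith
  have nvpos: "0 < nv" using C1 nv by linarith
  show "0 \<le> nv - R" using half nvpos by linarith
  have sq: "nv\<^sup>2 / 4 \<le> (nv - R)\<^sup>2"
  proof -
    have "(nv / 2)\<^sup>2 \<le> (nv - R)\<^sup>2" using half nvpos by (intro power_mono) auto
    then show ?thesis by (simp add: power_divide)
  qed
  have "C \<le> C * C" using C1 by (simp add: mult_le_cancel_left1)
  also have "C * C \<le> nv * nv" using nv C1 by (intro mult_mono) auto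
  finally have "C \<le> nv\<^sup>2" by (simp add: power2_eq_square)
  then show "4 * d * (1 + T) \<le> (nv - R)\<^sup>2" using sq dC by linarith
  have "nv / C \<le> (nv - R)\<^sup>2 / (4 * T)"
  proof -
    have "16 * T \<le> C * C" using TC \<open>C \<le> C * C\<close> by linarith
    also have "\<dots> \<le> nv * C" using nv C1 by (intro mult_right_mono) auto
    finally have "16 * T \<le> nv * C" .
    then have "nv * (16 * T) \<le> nv * (nv * C)" using nvpos by (intro mult_left_mono) auto
    then have "nv / C \<le> nv\<^sup>2 / (16 * T)" using C1 T by (simp add: field_simps power2_eq_square)
    also have "\<dots> \<le> (nv - R)\<^sup>2 / (4 * T)" using sq T by (simp add: field_simps)
    finally show ?thesis .
  qed
  then have e: "exp (- (nv - R)\<^sup>2 / (4 * T)) \<le> exp (- nv / C)" by simp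
  have "\<Gamma> * (exp (- (nv - R)\<^sup>2 / (4 * T)) * V) = (\<Gamma> * V) * exp (- (nv - R)\<^sup>2 / (4 * T))" by simp
  also have "\<dots> \<le> C * exp (- nv / C)" using GV e G V C1 by (intro mult_mono) auto
  finally show "\<Gamma> * (exp (- (nv - R)\<^sup>2 / (4 * T)) * V) \<le> C * exp (- nv / C)" .
qed

lemma ps_facts:
  assumes ps: "particle_system M R \<Gamma> f0 Z B"
  shows "prob_space M" "0 \<le> \<Gamma>" "0 \<le> R" "\<And>i. 1 \<le> i \<Longrightarrow> std_BM M (B i)"
proof -
  have adm: "admissible_f0 R \<Gamma> f0" using ps unfolding particle_system_def by auto
  then have f0: "\<And>z. 0 \<le> f0 z" "\<And>z. f0 z \<le> \<Gamma>" "\<And>z. norm z > R \<Longrightarrow> f0 z = 0"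
    and int1: "(\<integral>\<^sup>+ z. ennreal (f0 z) \<partial>lborel) = 1"
    unfolding admissible_f0_def by auto
  show "prob_space M" "\<And>i. 1 \<le> i \<Longrightarrow> std_BM M (B i)" using ps unfolding particle_system_def by auto
  show "0 \<le> \<Gamma>" using f0(1)[of 0] f0(2)[of 0] by linarith
  show "0 \<le> R"
  proof (rule ccontr)
    assume "\<not> 0 \<le> R"
    then have "\<And>z. f0 z = 0" using f0(3) by (metis norm_ge_zero not_le order_le_less_trans)
    then have "(\<integral>\<^sup>+ z. ennreal (f0 z) \<partial>lborel) = 0" by simp
    then show False using int1 by simp
  qed
qed

lemma part1:
  fixes M :: "'a measure" and Z :: "nat \<Rightarrow> 'a \<Rightarrow> (real^'d) \<times> (real^'d)" and B :: "nat \<Rightarrow> 'a \<Rightarrow> real \<Rightarrow> real^'d"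
  assumes ps: "particle_system M R \<Gamma> f0 Z B" and t: "0 \<le> t"
  shows "\<exists>g. distributed M lborel (\<lambda>\<omega>. particle (Z 1) (B 1) t \<omega> - particle (Z 2) (B 2) t \<omega>)
                     (\<lambda>z. ennreal (g z)) \<and> (\<forall>z. 0 \<le> g z \<and> g z \<le> \<Gamma>)"
proof -
  note pf = ps_facts[OF ps]
  interpret prob_space M by (rule pf(1))
  have G0: "0 \<le> \<Gamma>" by (rule pf(2))
  obtain h1 where d1: "distributed M lborel (particle (Z 1) (B 1) t) h1" and h1le: "\<And>z. h1 z \<le> ennreal \<Gamma>"
    using particle_density[OF ps t, of 1] by auto
  define p1 where "p1 z = enn2real (h1 z)" for z
  have d1': "distributed M lborel (particle (Z 1) (B 1) t) (\<lambda>z. ennreal (p1 z))"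
    unfolding p1_def by (rule density_real(1)[OF d1 h1le G0])
  have p1b: "\<And>z. 0 \<le> p1 z \<and> p1 z \<le> \<Gamma>"
    unfolding p1_def by (rule density_real(2)[OF d1 h1le G0])
  have indall: "indep_vars (\<lambda>_. borel \<Otimes>\<^sub>M PiM UNIV (\<lambda>_::real. borel)) (\<lambda>i \<omega>. (Z i \<omega>, B i \<omega>)) {1..}"
    using ps unfolding particle_system_def by auto
  have ind12: "indep_var (PiM {1::nat} (\<lambda>_. borel \<Otimes>\<^sub>M PiM UNIV (\<lambda>_::real. borel))) (\<lambda>\<omega>. restrict (\<lambda>i. (Z i \<omega>, B i \<omega>)) {1})
     (PiM {2::nat} (\<lambda>_. borel \<Otimes>\<^sub>M PiM UNIV (\<lambda>_::real. borel))) (\<lambda>\<omega>. restrict (\<lambda>i. (Z i \<omega>, B i \<omega>)) {2})"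
    by (rule indep_var_restrict[OF indall]) auto
  define F1 where "F1 = (\<lambda>f::nat \<Rightarrow> ((real^'d) \<times> (real^'d)) \<times> (real \<Rightarrow> real^'d). Fp t (f 1) :: (real^'d) \<times> (real^'d))"
  define F2 where "F2 = (\<lambda>f::nat \<Rightarrow> ((real^'d) \<times> (real^'d)) \<times> (real \<Rightarrow> real^'d). - Fp t (f 2) :: (real^'d) \<times> (real^'d))"
  have F1m: "F1 \<in> borel_measurable (PiM {1::nat} (\<lambda>_. borel \<Otimes>\<^sub>M PiM UNIV (\<lambda>_::real. borel)))"
  proof -
    have c: "(\<lambda>f. f 1) \<in> measurable (PiM {1::nat} (\<lambda>_. borel \<Otimes>\<^sub>M PiM UNIV (\<lambda>_::real. borel))) (borel \<Otimes>\<^sub>M PiM UNIV (\<lambda>_::real. borel))"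
      by (rule measurable_component_singleton) simp
    show ?thesis unfolding F1_def by (rule measurable_compose[OF c Fp_measurable])
  qed
  have F2m: "F2 \<in> borel_measurable (PiM {2::nat} (\<lambda>_. borel \<Otimes>\<^sub>M PiM UNIV (\<lambda>_::real. borel)))"
  proof -
    have c: "(\<lambda>f. f 2) \<in> measurable (PiM {2::nat} (\<lambda>_. borel \<Otimes>\<^sub>M PiM UNIV (\<lambda>_::real. borel))) (borel \<Otimes>\<^sub>M PiM UNIV (\<lambda>_::real. borel))"
      by (rule measurable_component_singleton) simp
    show ?thesis unfolding F2_def by (intro borel_measurable_uminus measurable_compose[OF c Fp_measurable])
  qed
  define U where "U = F1 \<circ> (\<lambda>\<omega>. restrict (\<lambda>i. (Z i \<omega>, B i \<omega>)) {1})"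
  define W where "W = F2 \<circ> (\<lambda>\<omega>. restrict (\<lambda>i. (Z i \<omega>, B i \<omega>)) {2})"
  have ind: "indep_var borel U borel W"
    unfolding U_def W_def by (rule indep_var_compose[OF ind12 F1m F2m])
  have Wm: "random_variable borel W" using ind unfolding indep_var_eq by auto
  have U_eq: "U \<omega> = particle (Z 1) (B 1) t \<omega>" if "\<omega> \<in> space M" for \<omega>
    using particle_Fp[OF pf(4)[of 1] that t, of "Z 1"] by (simp add: U_def F1_def)
  have W_eq: "W \<omega> = - particle (Z 2) (B 2) t \<omega>" if "\<omega> \<in> space M" for \<omega>
    using particle_Fp[OF pf(4)[of 2] that t, of "Z 2"] by (simp add: W_def F2_def)
  have dU: "distributed M lborel U (\<lambda>z. ennreal (p1 z))"
    by (rule distributed_cong_rv[OF d1']) (simp add: U_eq)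
  define P where "P = distr M borel W"
  interpret PP: prob_space P unfolding P_def by (rule prob_space_distr[OF Wm])
  have dS: "distributed M lborel (\<lambda>\<omega>. U \<omega> + W \<omega>) (\<lambda>z. \<integral>\<^sup>+w. ennreal (p1 (z - w)) \<partial>P)"
    unfolding P_def by (rule conv_density[OF dU Wm ind])
  have dS': "distributed M lborel (\<lambda>\<omega>. particle (Z 1) (B 1) t \<omega> - particle (Z 2) (B 2) t \<omega>) (\<lambda>z. \<integral>\<^sup>+w. ennreal (p1 (z - w)) \<partial>P)"
    by (rule distributed_cong_rv[OF dS]) (simp add: U_eq W_eq)
  have hle: "(\<integral>\<^sup>+w. ennreal (p1 (z - w)) \<partial>P) \<le> ennreal \<Gamma>" for z
  proof -
    have "(\<integral>\<^sup>+w. ennreal (p1 (z - w)) \<partial>P) \<le> (\<integral>\<^sup>+w. ennreal \<Gamma> \<partial>P)"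
      by (intro nn_integral_mono) (simp add: p1b ennreal_leI)
    also have "\<dots> = ennreal \<Gamma>" by (simp add: PP.emeasure_space_1)
    finally show ?thesis .
  qed
  show ?thesis
  proof (intro exI conjI allI)
    show "distributed M lborel (\<lambda>\<omega>. particle (Z 1) (B 1) t \<omega> - particle (Z 2) (B 2) t \<omega>)
      (\<lambda>z. ennreal (enn2real (\<integral>\<^sup>+w. ennreal (p1 (z - w)) \<partial>P)))"
      by (rule density_real(1)[OF dS' hle G0])
    fix z
    show "0 \<le> enn2real (\<integral>\<^sup>+w. ennreal (p1 (z - w)) \<partial>P)" "enn2real (\<integral>\<^sup>+w. ennreal (p1 (z - w)) \<partial>P) \<le> \<Gamma>"
      using density_real(2)[OF dS' hle G0, of z] by auto
  qed
qed

lemma part2: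
  fixes M :: "'a measure" and Z :: "nat \<Rightarrow> 'a \<Rightarrow> (real^'d) \<times> (real^'d)" and B :: "nat \<Rightarrow> 'a \<Rightarrow> real \<Rightarrow> real^'d"
    and R \<Gamma> T C :: real
  assumes C: "C = 1 + \<bar>\<Gamma>\<bar> * (unit_ball_vol (real CARD('d)) * \<bar>R\<bar> ^ CARD('d)) + 2 * \<bar>R\<bar> + 16 * \<bar>T\<bar> + 16 * real CARD('d) * (1 + \<bar>T\<bar>)"
    and ps: "particle_system M R \<Gamma> f0 Z B" and t: "t \<in> {0..T}"
  shows "\<exists>p. distributed M lborel (particle (Z 1) (B 1) t) (\<lambda>z. ennreal (p z)) \<and>
            (\<forall>x v. 0 \<le> p (x, v) \<and>
               p (x, v) \<le> (if norm v \<ge> C then C * exp (- norm v / C) else \<Gamma>))"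
proof -
  note pf = ps_facts[OF ps]
  have G0: "0 \<le> \<Gamma>" and R0: "0 \<le> R" by (rule pf(2), rule pf(3))
  have bm: "std_BM M (B 1)" by (rule pf(4)) simp
  have t0: "0 \<le> t" and tT: "t \<le> T" using t by auto
  obtain h where d: "distributed M lborel (particle (Z 1) (B 1) t) h" and hle: "\<And>z. h z \<le> ennreal \<Gamma>"
    and htail: "\<And>x v. h (x, v) \<le> ennreal \<Gamma> * emeasure M {\<omega>\<in>space M. norm (v - B 1 \<omega> t) \<le> R}"
    using particle_density[OF ps t0, of 1] by auto
  define V where "V = unit_ball_vol (real CARD('d)) * R ^ CARD('d)"
  have V0: "0 \<le> V" unfolding V_def using R0 by simp
  have C': "C = 1 + \<Gamma> * V + 2 * R + 16 * \<bar>T\<bar> + 16 * real CARD('d) * (1 + \<bar>T\<bar>)"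
    using C G0 R0 unfolding V_def by simp
  have C1: "1 + 2 * R \<le> C" using C' G0 V0 by (simp add: mult_nonneg_nonneg)
  show ?thesis
  proof (intro exI conjI allI)
    show "distributed M lborel (particle (Z 1) (B 1) t) (\<lambda>z. ennreal (enn2real (h z)))"
      by (rule density_real(1)[OF d hle G0])
    fix x v
    show "0 \<le> enn2real (h (x, v))" by simp
    show "enn2real (h (x, v)) \<le> (if norm v \<ge> C then C * exp (- norm v / C) else \<Gamma>)"
    proof (cases "norm v \<ge> C")
      case False
      then show ?thesis using density_real(2)[OF d hle G0, of "(x, v)"] by simp
    next
      case True
      have key: "h (x, v) \<le> ennreal (C * exp (- norm v / C))"
      proof (cases "t = 0")
        case True
        have e: "{\<omega>\<in>space M. norm (v - B 1 \<omega> t) \<le> R} = {}"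
          using bm \<open>norm v \<ge> C\<close> C1 R0 True unfolding std_BM_def by auto
        have "h (x, v) \<le> 0" using htail[of x v] by (simp only: e emeasure_empty mult_zero_right)
        then show ?thesis by (meson order_trans zero_le)
      next
        case False
        then have tpos: "0 < t" using t0 by simp
        then have Tpos: "0 < T" using tT by simp
        have C'': "C = 1 + \<Gamma> * V + 2 * R + 16 * T + 16 * real CARD('d) * (1 + T)"
          using C' Tpos by simp
        note ti = tail_ineq[OF G0 V0 R0 Tpos _ C'' True]
        have eb: "emeasure M {\<omega>\<in>space M. norm (v - B 1 \<omega> t) \<le> R} \<le> ennreal (exp (- (norm v - R)\<^sup>2 / (4 * T)) * V)"
          unfolding V_def by (rule ball_prob_bound[OF pf(1) bm tpos tT R0 ti(1)]) (use ti(2) in simp_all)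
        have "h (x, v) \<le> ennreal \<Gamma> * ennreal (exp (- (norm v - R)\<^sup>2 / (4 * T)) * V)"
          using htail[of x v] eb by (meson mult_left_mono order_trans zero_le)
        also have "\<dots> = ennreal (\<Gamma> * (exp (- (norm v - R)\<^sup>2 / (4 * T)) * V))"
          using G0 V0 by (simp add: ennreal_mult)
        also have "\<dots> \<le> ennreal (C * exp (- norm v / C))"
          by (rule ennreal_leI) (rule ti(3), simp)
        finally show ?thesis .
      qed
      have "0 \<le> C * exp (- norm v / C)" using C1 R0 by simp
      then have "enn2real (h (x, v)) \<le> C * exp (- norm v / C)"
        using enn2real_mono[OF key] by simp
      then show ?thesis using True by simp
    qed
  qed
qed

theorem lemma5p1:
  fixes R \<Gamma> T :: real
  shows
   "(\<forall>(M::'a measure) f0 (Z::nat \<Rightarrow> 'a \<Rightarrow> (real^'d) \<times> (real^'d)) B.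
       particle_system M R \<Gamma> f0 Z B \<longrightarrow>
       (\<forall>t\<ge>0. \<exists>g. distributed M lborel (\<lambda>\<omega>. particle (Z 1) (B 1) t \<omega> - particle (Z 2) (B 2) t \<omega>)
                     (\<lambda>z. ennreal (g z)) \<and> (\<forall>z. 0 \<le> g z \<and> g z \<le> \<Gamma>))) \<and>
    (\<exists>C::real. 0 < C \<and>
       (\<forall>(M::'a measure) f0 (Z::nat \<Rightarrow> 'a \<Rightarrow> (real^'d) \<times> (real^'d)) B.
         particle_system M R \<Gamma> f0 Z B \<longrightarrow>
         (\<forall>t\<in>{0..T}. \<exists>p. distributed M lborel (particle (Z 1) (B 1) t) (\<lambda>z. ennreal (p z)) \<and>
            (\<forall>x v. 0 \<le> p (x, v) \<and>
               p (x, v) \<le> (if norm v \<ge> C then C * exp (- norm v / C) else \<Gamma>)))))"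
proof (intro conjI)
  show "\<forall>(M::'a measure) f0 (Z::nat \<Rightarrow> 'a \<Rightarrow> (real^'d) \<times> (real^'d)) B.
       particle_system M R \<Gamma> f0 Z B \<longrightarrow>
       (\<forall>t\<ge>0. \<exists>g. distributed M lborel (\<lambda>\<omega>. particle (Z 1) (B 1) t \<omega> - particle (Z 2) (B 2) t \<omega>)
                     (\<lambda>z. ennreal (g z)) \<and> (\<forall>z. 0 \<le> g z \<and> g z \<le> \<Gamma>))"
    using part1 by blast
  define C :: real where "C = 1 + \<bar>\<Gamma>\<bar> * (unit_ball_vol (real CARD('d)) * \<bar>R\<bar> ^ CARD('d)) + 2 * \<bar>R\<bar> + 16 * \<bar>T\<bar> + 16 * real CARD('d) * (1 + \<bar>T\<bar>)"
  have Cpos: "0 < C" unfolding C_def by (simp add: add_pos_nonneg)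
  show "\<exists>C::real. 0 < C \<and>
       (\<forall>(M::'a measure) f0 (Z::nat \<Rightarrow> 'a \<Rightarrow> (real^'d) \<times> (real^'d)) B.
         particle_system M R \<Gamma> f0 Z B \<longrightarrow>
         (\<forall>t\<in>{0..T}. \<exists>p. distributed M lborel (particle (Z 1) (B 1) t) (\<lambda>z. ennreal (p z)) \<and>
            (\<forall>x v. 0 \<le> p (x, v) \<and>
               p (x, v) \<le> (if norm v \<ge> C then C * exp (- norm v / C) else \<Gamma>))))"
    using Cpos part2[OF C_def] by blast
qed


end
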